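(* Let $X$ be an $n$-dimensional real normed space and let $Y \subseteq X$ be a $k$-dimensional subspace, where $1 \leq k \leq n-1$. Suppose that there exists a minimal Chalmers–Metcalf operator $T$ for $Y$ supported on $l$ pairs. Then $\dim \mathcal{P}_{\min}(X, Y) \leq k(n-k) - l + 1$.
   Context: A projection onto $Y$ is a linear $P:X\to Y$ with $P|_Y=\mathrm{id}_Y$; $\lambda(Y,X)$ is the infimum of the operator norms of projections and $\mathcal{P}_{\min}(X,Y)$ the set of projections of norm $\lambda(Y,X)$; $\dim\mathcal{P}_{\min}(X,Y)$ is the affine dimension of this convex subset of $\mathcal{L}(X,X)$. For $x\in X$, $f\in X^*$, $x\otimes f$ is the operator $z\mapsto f(z)x$. A Chalmers–Metcalf operator for $Y$ is an operator $T=\sum_{i=1}^{l}\alpha_i x_i\otimes f_i:X\to X$ with $(x_i,f_i)\in\mathrm{ext}\,B_X\times\mathrm{ext}\,B_{X^*}$ (extreme points of the unit balls of $X$ and $X^*$), $\alpha_i>0$, $\sum_i\alpha_i=1$, $T(Y)\subseteq Y$, and $f_i(P_0(x_i))=\|P_0\|=\lambda(Y,X)$ for all $i$ and some fixed minimal projection $P_0$; it is supported on the $l$ pairs $(x_i,f_i)$. It is minimal if no proper subset of the pairs $(x_i,f_i)$ yields a Chalmers–Metcalf operator for $Y$ with any choice of weights. *)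

theory Defs
  imports "HOL-Analysis.Analysis"
begin

text \<open>In finite dimension every linear operator is bounded, so L(X,X) = 'a \<Rightarrow>L 'a,
  and the norm of the blinfun type is the operator norm.\<close>
definition projections :: "'a::real_normed_vector set \<Rightarrow> ('a \<Rightarrow>\<^sub>L 'a) set" where
  "projections Y = {P. (\<forall>x. blinfun_apply P x \<in> Y) \<and> (\<forall>y\<in>Y. blinfun_apply P y = y)}"

definition proj_const :: "'a::real_normed_vector set \<Rightarrow> real" where
  "proj_const Y = Inf (norm ` projections Y)"

definition min_projections :: "'a::real_normed_vector set \<Rightarrow> ('a \<Rightarrow>\<^sub>L 'a) set" where
  "min_projections Y = {P \<in> projections Y. norm P = proj_const Y}"

definition affine_dimension :: "'b::real_vector set \<Rightarrow> int" where
  "affine_dimension S = (if S = {} then -1 else int (dim {p - q | p q. p \<in> S \<and> q \<in> S}))"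

definition CM_sum :: "('a::real_normed_vector \<times> ('a \<Rightarrow>\<^sub>L real)) set
    \<Rightarrow> ('a \<times> ('a \<Rightarrow>\<^sub>L real) \<Rightarrow> real) \<Rightarrow> 'a \<Rightarrow> 'a" where
  "CM_sum S \<alpha> = (\<lambda>z. \<Sum>p\<in>S. \<alpha> p *\<^sub>R (blinfun_apply (snd p) z *\<^sub>R fst p))"

definition is_CM_op :: "'a::real_normed_vector set \<Rightarrow> ('a \<Rightarrow> 'a)
    \<Rightarrow> ('a \<times> ('a \<Rightarrow>\<^sub>L real)) set \<Rightarrow> ('a \<times> ('a \<Rightarrow>\<^sub>L real) \<Rightarrow> real) \<Rightarrow> bool" where
  "is_CM_op Y T S \<alpha> \<longleftrightarrow>
     finite S \<and> S \<noteq> {} \<and>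
     (\<forall>p\<in>S. fst p extreme_point_of cball 0 1 \<and> snd p extreme_point_of cball 0 1 \<and> \<alpha> p > 0) \<and>
     sum \<alpha> S = 1 \<and>
     T = CM_sum S \<alpha> \<and>
     (\<forall>y\<in>Y. T y \<in> Y) \<and>
     (\<exists>P0\<in>min_projections Y. \<forall>p\<in>S. blinfun_apply (snd p) (blinfun_apply P0 (fst p)) = proj_const Y)"

definition minimal_CM_support :: "'a::real_normed_vector set \<Rightarrow> ('a \<times> ('a \<Rightarrow>\<^sub>L real)) set \<Rightarrow> bool" where
  "minimal_CM_support Y S \<longleftrightarrow> (\<forall>S' \<beta> T'. S' \<subset> S \<longrightarrow> \<not> is_CM_op Y T' S' \<beta>)"

end

theory Submission
  imports Defs
begin


lemma key_ineq:
  fixes b w :: "'a::real_normed_vector"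
  assumes "subspace V" "w \<in> V"
  shows "\<bar>c\<bar> * infdist b V \<le> norm (c *\<^sub>R b + w)"
proof (cases "c = 0")
  case True then show ?thesis by simp
next
  case False
  have "- (w /\<^sub>R c) \<in> V" using assms by (simp add: subspace_neg subspace_scale)
  then have "infdist b V \<le> dist b (- (w /\<^sub>R c))" by (rule infdist_le)
  also have "\<dots> = norm (b + w /\<^sub>R c)" by (simp add: dist_norm)
  finally have "\<bar>c\<bar> * infdist b V \<le> \<bar>c\<bar> * norm (b + w /\<^sub>R c)"
    by (simp add: mult_left_mono)
  also have "\<dots> = norm (c *\<^sub>R (b + w /\<^sub>R c))" by simp
  also have "c *\<^sub>R (b + w /\<^sub>R c) = c *\<^sub>R b + w" using False by (simp add: scaleR_add_right)
  finally show ?thesis .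
qed

lemma closed_span_finite:
  fixes B :: "'a::real_normed_vector set"
  assumes "finite B"
  shows "closed (span B)"
  using assms
proof (induction B rule: finite_induct)
  case empty then show ?case by simp
next
  case (insert b B)
  show ?case
  proof (cases "b \<in> span B")
    case True then show ?thesis using insert by (simp add: span_redundant)
  next
    case False
    define d where "d = infdist b (span B)"
    have dpos: "d > 0" unfolding d_def
      using infdist_pos_not_in_closed[OF insert.IH _ False] span_zero by blast
    show ?thesis unfolding closed_sequential_limits
    proof (intro allI impI, elim conjE)
      fix x l assume xin: "\<forall>n. x n \<in> span (insert b B)" and xl: "x \<longlonglongrightarrow> l"
      have "\<forall>n. \<exists>c. x n - c *\<^sub>R b \<in> span B" using xin by (simp add: span_insert)
      then obtain c where c: "\<And>n. x n - c n *\<^sub>R b \<in> span B" by metis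
      have "Cauchy c"
      proof (rule metric_CauchyI)
        fix e :: real assume "e > 0"
        have "Cauchy x" using xl by (rule LIMSEQ_imp_Cauchy)
        then obtain M where M: "\<And>m n. m \<ge> M \<Longrightarrow> n \<ge> M \<Longrightarrow> dist (x m) (x n) < e * d"
          using \<open>e > 0\<close> dpos by (meson metric_CauchyD mult_pos_pos)
        show "\<exists>M. \<forall>m\<ge>M. \<forall>n\<ge>M. dist (c m) (c n) < e"
        proof (intro exI allI impI)
          fix m n assume "m \<ge> M" "n \<ge> M"
          have w: "(x m - c m *\<^sub>R b) - (x n - c n *\<^sub>R b) \<in> span B"
            using c by (simp add: span_diff)
          have "\<bar>c m - c n\<bar> * d \<le> norm ((c m - c n) *\<^sub>R b + ((x m - c m *\<^sub>R b) - (x n - c n *\<^sub>R b)))"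
            unfolding d_def by (rule key_ineq[OF subspace_span w])
          also have "(c m - c n) *\<^sub>R b + ((x m - c m *\<^sub>R b) - (x n - c n *\<^sub>R b)) = x m - x n"
            by (simp add: algebra_simps)
          also have "norm (x m - x n) < e * d" using M[OF \<open>m \<ge> M\<close> \<open>n \<ge> M\<close>] by (simp add: dist_norm)
          finally show "dist (c m) (c n) < e" using dpos by (simp add: dist_real_def)
        qed
      qed
      then obtain c0 where c0: "c \<longlonglongrightarrow> c0" using Cauchy_convergent_iff convergent_def by blast
      have "(\<lambda>n. x n - c n *\<^sub>R b) \<longlonglongrightarrow> l - c0 *\<^sub>R b"
        by (intro tendsto_intros xl c0)
      then have "l - c0 *\<^sub>R b \<in> span B"
        using closed_sequentially[OF insert.IH, of "\<lambda>n. x n - c n *\<^sub>R b"] c by blast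
      then show "l \<in> span (insert b B)" by (auto simp: span_insert)
    qed
  qed
qed

lemma linear_functional_bounded:
  fixes g :: "'a::real_normed_vector \<Rightarrow> real"
  assumes fin: "\<exists>B. finite B \<and> span B = (UNIV :: 'a set)" and lin: "linear g"
  shows "bounded_linear g"
proof (cases "\<forall>x. g x = 0")
  case True
  then have "g = (\<lambda>x. 0)" by auto
  then show ?thesis by simp
next
  case False
  then obtain u where gu: "g u \<noteq> 0" by auto
  define u' where "u' = u /\<^sub>R g u"
  have "g u' = inverse (g u) *\<^sub>R g u" unfolding u'_def by (rule real_vector.linear_scale[OF lin])
  then have gu': "g u' = 1" using gu by (simp add: field_simps)
  define K where "K = {x. g x = 0}"
  have subK: "subspace K" unfolding K_def
    by (rule real_vector.linear_subspace_kernel[OF lin])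
  obtain B where B: "finite B" "span B = (UNIV::'a set)" using fin by blast
  obtain BK where BK: "BK \<subseteq> K" "independent BK" "K \<subseteq> span BK" "card BK = dim K"
    by (rule basis_exists[of K])
  have "finite BK" using independent_span_bound[OF B(1) BK(2)] B(2) by simp
  have "span BK = K" using span_subspace[OF BK(1) BK(3) subK] .
  then have clK: "closed K" using closed_span_finite[OF \<open>finite BK\<close>] by simp
  have "u' \<notin> K" using gu' K_def by simp
  define d where "d = infdist u' K"
  have dpos: "d > 0" unfolding d_def
  proof -
    have "0 \<in> K" using subK subspace_0 by blast
    then show "0 < infdist u' K" using infdist_pos_not_in_closed[OF clK _ \<open>u' \<notin> K\<close>] by blast
  qed
  show ?thesis
  proof (rule bounded_linear_intro[where K = "1/d"])
    show "g (x + y) = g x + g y" for x y by (simp add: real_vector.linear_add[OF lin])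
    show "g (r *\<^sub>R x) = r *\<^sub>R g x" for r x by (simp add: real_vector.linear_scale[OF lin])
    fix x
    have "x - g x *\<^sub>R u' \<in> K" unfolding K_def
      by (simp add: real_vector.linear_diff[OF lin] real_vector.linear_scale[OF lin] gu')
    then have "\<bar>g x\<bar> * d \<le> norm (g x *\<^sub>R u' + (x - g x *\<^sub>R u'))"
      unfolding d_def by (rule key_ineq[OF subK])
    then have "\<bar>g x\<bar> * d \<le> norm x" by simp
    then show "norm (g x) \<le> norm x * (1/d)" using dpos by (simp add: field_simps)
  qed
qed



lemma dual_basis:
  fixes \<psi> :: "'i \<Rightarrow> 'e::real_vector \<Rightarrow> real"
  assumes "finite I" "subspace W" "\<And>i. i \<in> I \<Longrightarrow> linear (\<psi> i)"
    and "\<And>c. \<forall>w\<in>W. (\<Sum>i\<in>I. c i * \<psi> i w) = 0 \<Longrightarrow> \<forall>i\<in>I. c i = 0"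
  shows "\<exists>d. (\<forall>i\<in>I. d i \<in> W) \<and> (\<forall>i\<in>I. \<forall>j\<in>I. \<psi> j (d i) = (if i = j then 1 else 0))"
  using assms(1,3,4)
proof (induction I rule: finite_induct)
  case empty then show ?case by simp
next
  case (insert j I)
  have linI: "\<And>i. i \<in> I \<Longrightarrow> linear (\<psi> i)" using insert.prems(1) by simp
  have linj: "linear (\<psi> j)" using insert.prems(1) by simp
  have indI: "\<forall>i\<in>I. c i = 0" if h: "\<forall>w\<in>W. (\<Sum>i\<in>I. c i * \<psi> i w) = 0" for c
  proof -
    have "\<forall>w\<in>W. (\<Sum>i\<in>insert j I. (c(j := 0)) i * \<psi> i w) = 0"
    proof
      fix w assume "w \<in> W"
      have "(\<Sum>i\<in>insert j I. (c(j := 0)) i * \<psi> i w) = (\<Sum>i\<in>I. (c(j := 0)) i * \<psi> i w)"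
        using insert.hyps by simp
      also have "\<dots> = (\<Sum>i\<in>I. c i * \<psi> i w)"
        using insert.hyps by (intro sum.cong) auto
      finally show "(\<Sum>i\<in>insert j I. (c(j := 0)) i * \<psi> i w) = 0" using h \<open>w \<in> W\<close> by simp
    qed
    from insert.prems(2)[OF this] show ?thesis using insert.hyps by (auto split: if_splits)
  qed
  obtain d where dW: "\<forall>i\<in>I. d i \<in> W" and dd: "\<forall>i\<in>I. \<forall>j\<in>I. \<psi> j (d i) = (if i = j then 1 else 0)"
    using insert.IH[OF linI indI] by blast
  define K where "K = {w\<in>W. \<forall>i\<in>I. \<psi> i w = 0}"
  show ?case
  proof (cases "\<exists>u\<in>K. \<psi> j u \<noteq> 0")
    case True
    then obtain u where uK: "u \<in> K" and uj: "\<psi> j u \<noteq> 0" by blast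
    define e where "e = u /\<^sub>R \<psi> j u"
    have "\<psi> j e = inverse (\<psi> j u) *\<^sub>R \<psi> j u" unfolding e_def by (rule real_vector.linear_scale[OF linj])
    then have ej: "\<psi> j e = 1" using uj by (simp add: field_simps)
    have eW: "e \<in> W" using uK assms(2) unfolding K_def e_def by (simp add: subspace_scale)
    have eI: "\<psi> i e = 0" if "i \<in> I" for i
    proof -
      have "\<psi> i e = inverse (\<psi> j u) *\<^sub>R \<psi> i u" unfolding e_def by (rule real_vector.linear_scale[OF linI[OF that]])
      then show ?thesis using uK that unfolding K_def by simp
    qed
    define d' where "d' = (\<lambda>i. if i = j then e else d i - \<psi> j (d i) *\<^sub>R e)"
    show ?thesis
    proof (intro exI conjI ballI)
      fix i assume i: "i \<in> insert j I"
      show "d' i \<in> W" unfolding d'_def using i dW eW assms(2)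
        by (auto intro!: subspace_diff subspace_scale)
    next
      fix i j' assume i: "i \<in> insert j I" and j': "j' \<in> insert j I"
      show "\<psi> j' (d' i) = (if i = j' then 1 else 0)"
      proof (cases "i = j")
        case True
        then show ?thesis using j' ej eI insert.hyps unfolding d'_def by auto
      next
        case False
        then have iI: "i \<in> I" using i by simp
        have lin': "linear (\<psi> j')" using insert.prems(1) j' by simp
        have "\<psi> j' (d' i) = \<psi> j' (d i) - \<psi> j (d i) * \<psi> j' e"
          unfolding d'_def using False
          by (simp add: real_vector.linear_diff[OF lin'] real_vector.linear_scale[OF lin'])
        then show ?thesis using j' iI dd ej eI insert.hyps False by auto
      qed
    qed
  next
    case False
    then have van: "\<And>u. u \<in> K \<Longrightarrow> \<psi> j u = 0" by blast
    define c where "c = (\<lambda>i. if i = j then 1 else - \<psi> j (d i))"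
    have "\<forall>w\<in>W. (\<Sum>i\<in>insert j I. c i * \<psi> i w) = 0"
    proof
      fix w assume wW: "w \<in> W"
      define u where "u = w - (\<Sum>i\<in>I. \<psi> i w *\<^sub>R d i)"
      have uW: "u \<in> W" unfolding u_def using wW dW assms(2)
        by (auto intro!: subspace_diff subspace_sum subspace_scale)
      have "\<psi> i' u = 0" if i': "i' \<in> I" for i'
      proof -
        have "\<psi> i' u = \<psi> i' w - (\<Sum>i\<in>I. \<psi> i w * \<psi> i' (d i))"
          unfolding u_def
          by (simp add: real_vector.linear_diff[OF linI[OF i']] real_vector.linear_sum[OF linI[OF i']]
              real_vector.linear_scale[OF linI[OF i']])
        also have "(\<Sum>i\<in>I. \<psi> i w * \<psi> i' (d i)) = (\<Sum>i\<in>I. if i = i' then \<psi> i w else 0)"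
          using dd i' by (intro sum.cong) auto
        also have "\<dots> = \<psi> i' w" using i' insert.hyps(1) by (simp add: sum.delta')
        finally show ?thesis by simp
      qed
      then have "u \<in> K" unfolding K_def using uW by blast
      then have "\<psi> j u = 0" by (rule van)
      moreover have "\<psi> j u = \<psi> j w - (\<Sum>i\<in>I. \<psi> i w * \<psi> j (d i))"
        unfolding u_def
        by (simp add: real_vector.linear_diff[OF linj] real_vector.linear_sum[OF linj]
            real_vector.linear_scale[OF linj])
      ultimately have eq: "\<psi> j w = (\<Sum>i\<in>I. \<psi> i w * \<psi> j (d i))" by simp
      have "(\<Sum>i\<in>insert j I. c i * \<psi> i w) = \<psi> j w + (\<Sum>i\<in>I. c i * \<psi> i w)"
        using insert.hyps unfolding c_def by simp
      also have "(\<Sum>i\<in>I. c i * \<psi> i w) = - (\<Sum>i\<in>I. \<psi> i w * \<psi> j (d i))"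
        unfolding c_def sum_negf[symmetric] using insert.hyps by (intro sum.cong) auto
      finally show "(\<Sum>i\<in>insert j I. c i * \<psi> i w) = 0" using eq by simp
    qed
    from insert.prems(2)[OF this] have "c j = 0" by simp
    then show ?thesis unfolding c_def by simp
  qed
qed

lemma dim_kernel_bound:
  fixes \<psi> :: "'i \<Rightarrow> 'e::real_vector \<Rightarrow> real"
  assumes I: "finite I" and sW: "subspace W" and WF: "W \<subseteq> span F" and F: "finite F"
    and lin: "\<And>i. i \<in> I \<Longrightarrow> linear (\<psi> i)"
    and ind: "\<And>c. \<forall>w\<in>W. (\<Sum>i\<in>I. c i * \<psi> i w) = 0 \<Longrightarrow> \<forall>i\<in>I. c i = 0"
  shows "dim {w\<in>W. \<forall>i\<in>I. \<psi> i w = 0} + card I \<le> dim W"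
proof -
  obtain d where dW: "\<forall>i\<in>I. d i \<in> W" and dd: "\<forall>i\<in>I. \<forall>j\<in>I. \<psi> j (d i) = (if i = j then 1 else 0)"
  proof -
    have "\<exists>d. (\<forall>i\<in>I. d i \<in> W) \<and> (\<forall>i\<in>I. \<forall>j\<in>I. \<psi> j (d i) = (if i = j then 1 else 0))"
      by (rule dual_basis[OF I sW, of \<psi>]) (use lin ind in blast)+
    then show ?thesis using that by blast
  qed
  define K where "K = {w\<in>W. \<forall>i\<in>I. \<psi> i w = 0}"
  obtain BK where BK: "BK \<subseteq> K" "independent BK" "K \<subseteq> span BK" "card BK = dim K"
    by (rule basis_exists[of K])
  have "BK \<subseteq> span F" using BK(1) WF unfolding K_def by auto
  then have fBK: "finite BK" using independent_span_bound[OF F BK(2)] by simp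
  have BKv: "\<psi> i b = 0" if "i \<in> I" "b \<in> BK" for i b
    using BK(1) that unfolding K_def by auto
  have main: "independent (BK \<union> d ` J) \<and> card (BK \<union> d ` J) = card BK + card J" if "J \<subseteq> I" for J
  proof -
    have "finite J" using that I finite_subset by blast
    then show ?thesis using that
    proof (induction J rule: finite_subset_induct')
      case empty then show ?case using BK(2) by simp
    next
      case (insert a J)
      have van: "\<psi> a x = 0" if "x \<in> span (BK \<union> d ` J)" for x
      proof (rule linear_eq_0_on_span[OF lin[OF insert.hyps(2)] _ that])
        fix y assume "y \<in> BK \<union> d ` J"
        then show "\<psi> a y = 0"
        proof
          assume "y \<in> BK" then show ?thesis using BKv insert.hyps(2) by blast
        next
          assume "y \<in> d ` J"
          then obtain j where "j \<in> J" "y = d j" by blast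
          then show ?thesis using dd insert.hyps insert.hyps(2) \<open>J \<subseteq> I\<close> by (metis subsetD)
        qed
      qed
      have "\<psi> a (d a) = 1" using dd insert.hyps(2) by simp
      then have notin: "d a \<notin> span (BK \<union> d ` J)" using van by force
      have eq: "BK \<union> d ` insert a J = insert (d a) (BK \<union> d ` J)" by auto
      have "independent (insert (d a) (BK \<union> d ` J))"
        using independent_insertI[OF notin] insert.IH by blast
      moreover have "card (insert (d a) (BK \<union> d ` J)) = Suc (card (BK \<union> d ` J))"
        using notin span_base[of "d a" "BK \<union> d ` J"] fBK insert.hyps(1)
        by (intro card_insert_disjoint) auto
      ultimately show ?case using eq insert.IH insert.hyps by simp
    qed
  qed
  from main[OF order_refl] have A: "independent (BK \<union> d ` I)" "card (BK \<union> d ` I) = card BK + card I"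
    by auto
  have AW: "BK \<union> d ` I \<subseteq> W" using BK(1) dW unfolding K_def by auto
  obtain BW where BW: "BW \<subseteq> W" "independent BW" "W \<subseteq> span BW" "card BW = dim W"
    by (rule basis_exists[of W])
  have fBW: "finite BW" using independent_span_bound[OF F BW(2)] BW(1) WF by auto
  have "card (BK \<union> d ` I) \<le> card BW"
    using independent_span_bound[OF fBW A(1)] AW BW(3) by auto
  then show ?thesis using A(2) BK(4) BW(4) unfolding K_def by simp
qed



lemma fin_basis:
  fixes Y :: "'a::real_normed_vector set"
  assumes fin: "\<exists>B. finite B \<and> span B = (UNIV :: 'a set)" and sY: "subspace Y"
  obtains BY where "BY \<subseteq> Y" "independent BY" "span BY = Y" "finite BY" "card BY = dim Y"
proof -
  obtain B where B: "finite B" "span B = (UNIV::'a set)" using fin by blast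
  obtain BY where BY: "BY \<subseteq> Y" "independent BY" "Y \<subseteq> span BY" "card BY = dim Y"
    by (rule basis_exists[of Y])
  have "finite BY" using independent_span_bound[OF B(1) BY(2)] B(2) by simp
  moreover have "span BY = Y" using span_subspace[OF BY(1) BY(3) sY] .
  ultimately show ?thesis using that BY by blast
qed

lemma trace_zero:
  fixes Y :: "'a::real_normed_vector set" and D :: "'a \<Rightarrow>\<^sub>L 'a"
  assumes fin: "\<exists>B. finite B \<and> span B = (UNIV :: 'a set)" and sY: "subspace Y"
    and finS: "finite S"
    and DY: "\<forall>x. blinfun_apply D x \<in> Y" and D0: "\<forall>y\<in>Y. blinfun_apply D y = 0"
    and inv: "\<forall>y\<in>Y. CM_sum S c y \<in> Y"
  shows "(\<Sum>p\<in>S. c p * blinfun_apply (snd p) (blinfun_apply D (fst p))) = 0"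
proof -
  obtain BY where BY: "BY \<subseteq> Y" "independent BY" "span BY = Y" "finite BY"
    using fin_basis[OF fin sY] by blast
  define h where "h b x = representation BY (blinfun_apply D x) b" for b x
  have Dsp: "blinfun_apply D x \<in> span BY" for x using DY BY(3) by simp
  have Dx: "blinfun_apply D x = (\<Sum>b\<in>BY. h b x *\<^sub>R b)" for x
    unfolding h_def using sum_representation_eq[OF BY(2) Dsp BY(4) order_refl] by simp
  have linh: "linear (h b)" for b
  proof (rule linearI)
    fix x y show "h b (x + y) = h b x + h b y"
      unfolding h_def by (simp add: blinfun.add_right representation_add[OF BY(2) Dsp Dsp])
  next
    fix r x show "h b (r *\<^sub>R x) = r *\<^sub>R h b x"
      unfolding h_def by (simp add: blinfun.scaleR_right representation_scale[OF BY(2) Dsp])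
  qed
  have f_eq: "blinfun_apply f (blinfun_apply D x) = (\<Sum>b\<in>BY. h b x * blinfun_apply f b)" for f :: "'a \<Rightarrow>\<^sub>L real" and x
    by (subst Dx) (simp add: blinfun.sum_right blinfun.scaleR_right)
  have "(\<Sum>p\<in>S. c p * blinfun_apply (snd p) (blinfun_apply D (fst p)))
      = (\<Sum>p\<in>S. \<Sum>b\<in>BY. c p * (h b (fst p) * blinfun_apply (snd p) b))"
    by (simp add: f_eq sum_distrib_left)
  also have "\<dots> = (\<Sum>b\<in>BY. \<Sum>p\<in>S. c p * (h b (fst p) * blinfun_apply (snd p) b))"
    by (rule sum.swap)
  also have "\<dots> = (\<Sum>b\<in>BY. 0)"
  proof (rule sum.cong[OF refl])
    fix b assume b: "b \<in> BY"
    have "(\<Sum>p\<in>S. c p * (h b (fst p) * blinfun_apply (snd p) b))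
        = h b (\<Sum>p\<in>S. (c p * blinfun_apply (snd p) b) *\<^sub>R fst p)"
      by (simp add: real_vector.linear_sum[OF linh] real_vector.linear_scale[OF linh] mult_ac)
    also have "(\<Sum>p\<in>S. (c p * blinfun_apply (snd p) b) *\<^sub>R fst p) = CM_sum S c b"
      unfolding CM_sum_def by simp
    also have "h b (CM_sum S c b) = 0"
    proof -
      have "CM_sum S c b \<in> Y" using inv b BY(1) by blast
      then have "blinfun_apply D (CM_sum S c b) = 0" using D0 by blast
      then show ?thesis unfolding h_def by (simp add: representation_zero)
    qed
    finally show "(\<Sum>p\<in>S. c p * (h b (fst p) * blinfun_apply (snd p) b)) = 0" .
  qed
  finally show ?thesis by simp
qed

lemma converse_inv:
  fixes Y :: "'a::real_normed_vector set"
  assumes fin: "\<exists>B. finite B \<and> span B = (UNIV :: 'a set)" and sY: "subspace Y"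
    and H: "\<And>D::'a \<Rightarrow>\<^sub>L 'a. (\<forall>x. blinfun_apply D x \<in> Y) \<Longrightarrow> (\<forall>y\<in>Y. blinfun_apply D y = 0) \<Longrightarrow>
       (\<Sum>p\<in>S. c p * blinfun_apply (snd p) (blinfun_apply D (fst p))) = 0"
  shows "\<forall>y\<in>Y. CM_sum S c y \<in> Y"
proof (rule ballI, rule ccontr)
  fix y assume yY: "y \<in> Y" and nv: "CM_sum S c y \<notin> Y"
  define v where "v = CM_sum S c y"
  obtain BY where BY: "BY \<subseteq> Y" "independent BY" "span BY = Y" "finite BY"
    using fin_basis[OF fin sY] by blast
  have "v \<notin> span BY" using nv BY(3) v_def by simp
  then have ind: "independent (insert v BY)" using independent_insertI BY(2) by blast
  obtain g where lg: "linear g" and gB: "\<forall>x\<in>insert v BY. g x = (if x = v then 1 else (0::real))"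
    using linear_independent_extend[OF ind, of "\<lambda>x. if x = v then 1 else 0"] by blast
  have gv: "g v = 1" using gB by simp
  have gY: "g x = 0" if "x \<in> Y" for x
  proof (rule linear_eq_0_on_span[OF lg _ ])
    fix b assume "b \<in> BY"
    moreover then have "b \<noteq> v" using \<open>v \<notin> span BY\<close> span_base by blast
    ultimately show "g b = 0" using gB by simp
  next
    show "x \<in> span BY" using that BY(3) by simp
  qed
  have bg: "bounded_linear g" by (rule linear_functional_bounded[OF fin lg])
  have bD: "bounded_linear (\<lambda>x. g x *\<^sub>R y)"
    using bounded_linear_compose[OF bounded_linear_scaleR_left bg] .
  define D where "D = Blinfun (\<lambda>x. g x *\<^sub>R y)"
  have Dapp: "blinfun_apply D x = g x *\<^sub>R y" for x
    unfolding D_def using bounded_linear_Blinfun_apply[OF bD] by simp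
  have "(\<Sum>p\<in>S. c p * blinfun_apply (snd p) (blinfun_apply D (fst p))) = 0"
    by (rule H) (auto simp: Dapp gY yY sY subspace_scale)
  moreover have "(\<Sum>p\<in>S. c p * blinfun_apply (snd p) (blinfun_apply D (fst p))) = g v"
    unfolding v_def CM_sum_def
    by (simp add: Dapp blinfun.scaleR_right real_vector.linear_sum[OF lg] real_vector.linear_scale[OF lg] mult_ac)
  ultimately show False using gv by simp
qed

lemma dim_W_bound:
  fixes Y :: "'a::real_normed_vector set"
  assumes fin: "\<exists>B. finite B \<and> span B = (UNIV :: 'a set)" and sY: "subspace Y"
    and n: "dim (UNIV :: 'a set) = n" and k: "dim Y = k"
  shows "\<exists>F. finite F \<and> card F \<le> k * (n - k) \<and>
     {D::'a \<Rightarrow>\<^sub>L 'a. (\<forall>x. blinfun_apply D x \<in> Y) \<and> (\<forall>y\<in>Y. blinfun_apply D y = 0)} \<subseteq> span F"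
proof -
  obtain B where B: "finite B" "span B = (UNIV::'a set)" using fin by blast
  obtain BY where BY: "BY \<subseteq> Y" "independent BY" "span BY = Y" "finite BY" "card BY = k"
    using fin_basis[OF fin sY] k by blast
  obtain BX where BX: "BY \<subseteq> BX" "independent BX" "(UNIV::'a set) \<subseteq> span BX"
    using maximal_independent_subset_extend[OF subset_UNIV BY(2)] by metis
  have fBX: "finite BX" using independent_span_bound[OF B(1) BX(2)] B(2) by simp
  have cBX: "card BX = n" using basis_card_eq_dim[of BX UNIV] BX n by simp
  define Z where "Z = BX - BY"
  have fZ: "finite Z" using fBX Z_def by simp
  have cZ: "card Z = n - k" unfolding Z_def using card_Diff_subset[OF BY(4) BX(1)] cBX BY(5) by simp
  define gz where "gz (z::'a) (x::'a) = representation BX x z" for z x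
  have spx: "x \<in> span BX" for x using BX(3) by blast
  have lgz: "linear (gz z)" for z
  proof (rule linearI)
    fix x y show "gz z (x + y) = gz z x + gz z y"
      unfolding gz_def by (simp add: representation_add[OF BX(2) spx spx])
  next
    fix r x show "gz z (r *\<^sub>R x) = r *\<^sub>R gz z x"
      unfolding gz_def by (simp add: representation_scale[OF BX(2) spx])
  qed
  have bE: "bounded_linear (\<lambda>x. gz z x *\<^sub>R a)" for z a
    using bounded_linear_compose[OF bounded_linear_scaleR_left linear_functional_bounded[OF fin lgz]] .
  define E where "E (a::'a) (z::'a) = (Blinfun (\<lambda>x. gz z x *\<^sub>R a) :: 'a \<Rightarrow>\<^sub>L 'a)" for a z
  have Eapp: "blinfun_apply (E a z) x = gz z x *\<^sub>R a" for a z x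
    unfolding E_def by (subst bounded_linear_Blinfun_apply[OF bE]) (rule refl)
  define F where "F = (\<lambda>(a, z). E a z) ` (BY \<times> Z)"
  have fF: "finite F" unfolding F_def using BY(4) fZ by simp
  have cF: "card F \<le> k * (n - k)"
  proof -
    have "card F \<le> card (BY \<times> Z)" unfolding F_def by (rule card_image_le) (use BY(4) fZ in simp)
    also have "\<dots> = k * (n - k)" using BY(5) cZ by (simp add: card_cartesian_product)
    finally show ?thesis .
  qed
  have "D \<in> span F" if DY: "\<forall>x. blinfun_apply D x \<in> Y" and D0: "\<forall>y\<in>Y. blinfun_apply D y = 0" for D
  proof -
    define s where "s a z = representation BY (blinfun_apply D z) a" for a z
    have Dz: "blinfun_apply D z = (\<Sum>a\<in>BY. s a z *\<^sub>R a)" for z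
      unfolding s_def using sum_representation_eq[OF BY(2) _ BY(4) order_refl] DY BY(3) by simp
    have eq: "D = (\<Sum>q\<in>BY \<times> Z. s (fst q) (snd q) *\<^sub>R E (fst q) (snd q))"
    proof (rule blinfun_eqI)
      fix x
      have "blinfun_apply D x = blinfun_apply D (\<Sum>b\<in>BX. gz b x *\<^sub>R b)"
        unfolding gz_def using sum_representation_eq[OF BX(2) spx fBX order_refl] by simp
      also have "\<dots> = (\<Sum>b\<in>BX. gz b x *\<^sub>R blinfun_apply D b)"
        by (simp add: blinfun.sum_right blinfun.scaleR_right)
      also have "\<dots> = (\<Sum>b\<in>Z. gz b x *\<^sub>R blinfun_apply D b)"
        by (rule sum.mono_neutral_right[OF fBX]) (use BY(1) D0 Z_def in auto)
      also have "\<dots> = (\<Sum>z\<in>Z. \<Sum>a\<in>BY. (s a z * gz z x) *\<^sub>R a)"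
        by (simp add: Dz scaleR_sum_right mult_ac)
      also have "\<dots> = (\<Sum>a\<in>BY. \<Sum>z\<in>Z. (s a z * gz z x) *\<^sub>R a)"
        by (rule sum.swap)
      also have "\<dots> = (\<Sum>q\<in>BY \<times> Z. (s (fst q) (snd q) * gz (snd q) x) *\<^sub>R fst q)"
        by (simp add: sum.cartesian_product split_def)
      also have "\<dots> = blinfun_apply (\<Sum>q\<in>BY \<times> Z. s (fst q) (snd q) *\<^sub>R E (fst q) (snd q)) x"
        by (simp add: blinfun.sum_left blinfun.scaleR_left Eapp)
      finally show "blinfun_apply D x = blinfun_apply (\<Sum>q\<in>BY \<times> Z. s (fst q) (snd q) *\<^sub>R E (fst q) (snd q)) x" .
    qed
    have "(\<Sum>q\<in>BY \<times> Z. s (fst q) (snd q) *\<^sub>R E (fst q) (snd q)) \<in> span F"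
    proof (rule span_sum)
      fix q assume "q \<in> BY \<times> Z"
      then have "E (fst q) (snd q) \<in> F" unfolding F_def by (auto intro!: image_eqI[where x=q])
      then show "s (fst q) (snd q) *\<^sub>R E (fst q) (snd q) \<in> span F" by (intro span_scale span_base)
    qed
    then show ?thesis using eq by simp
  qed
  then show ?thesis using fF cF by blast
qed



theorem mainTheorem11:
  fixes Y :: "'a::real_normed_vector set"
    and T :: "'a \<Rightarrow> 'a"
    and S :: "('a \<times> ('a \<Rightarrow>\<^sub>L real)) set"
    and \<alpha> :: "'a \<times> ('a \<Rightarrow>\<^sub>L real) \<Rightarrow> real"
    and n k l :: nat
  assumes "\<exists>B. finite B \<and> span B = (UNIV :: 'a set)"
    and "dim (UNIV :: 'a set) = n"
    and "subspace Y"
    and "dim Y = k"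
    and "1 \<le> k" and "k \<le> n - 1"
    and "is_CM_op Y T S \<alpha>"
    and "minimal_CM_support Y S"
    and "card S = l"
  shows "affine_dimension (min_projections Y) \<le> int k * (int n - int k) - int l + 1"
proof -
  note fin = assms(1) and sY = assms(3)
  define lam where "lam = proj_const Y"
  from assms(7) have finS: "finite S" and Sne: "S \<noteq> {}"
    and ext: "\<forall>p\<in>S. fst p extreme_point_of cball 0 1 \<and> snd p extreme_point_of cball 0 1 \<and> \<alpha> p > 0"
    and sa: "sum \<alpha> S = 1" and Tdef: "T = CM_sum S \<alpha>" and Tinv: "\<forall>y\<in>Y. T y \<in> Y"
    unfolding is_CM_op_def by auto
  from assms(7) have "\<exists>P0\<in>min_projections Y. \<forall>p\<in>S. blinfun_apply (snd p) (blinfun_apply P0 (fst p)) = proj_const Y"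
    unfolding is_CM_op_def by (elim conjE)
  then obtain P0 where P0: "P0 \<in> min_projections Y"
    and P0S: "\<forall>p\<in>S. blinfun_apply (snd p) (blinfun_apply P0 (fst p)) = lam"
    unfolding lam_def by (elim bexE)
  have apos: "\<alpha> p > 0" if "p \<in> S" for p using ext that by blast
  have nx: "norm (fst p) \<le> 1" if "p \<in> S" for p
    using ext that unfolding extreme_point_of_def by auto
  have nf: "norm (snd p) \<le> 1" if "p \<in> S" for p
    using ext that unfolding extreme_point_of_def by auto
  have bnd: "blinfun_apply (snd p) (blinfun_apply P (fst p)) \<le> norm P" if "p \<in> S" for p P
  proof -
    have "blinfun_apply (snd p) (blinfun_apply P (fst p)) \<le> norm (snd p) * norm (blinfun_apply P (fst p))"
      using norm_blinfun[of "snd p" "blinfun_apply P (fst p)"] by simp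
    also have "\<dots> \<le> 1 * (norm P * norm (fst p))"
      by (intro mult_mono nf that norm_blinfun) auto
    also have "\<dots> \<le> norm P" using nx[OF that] by (simp add: mult_left_le)
    finally show ?thesis .
  qed
  define W where "W = {D::'a \<Rightarrow>\<^sub>L 'a. (\<forall>x. blinfun_apply D x \<in> Y) \<and> (\<forall>y\<in>Y. blinfun_apply D y = 0)}"
  have sW: "subspace W"
    unfolding subspace_def W_def
    by (auto simp: blinfun.add_left blinfun.scaleR_left sY subspace_add subspace_scale subspace_0)
  have MPdiff: "P - Q \<in> W" if "P \<in> min_projections Y" "Q \<in> min_projections Y" for P Q
    using that unfolding W_def min_projections_def projections_def
    by (auto simp: blinfun.diff_left sY subspace_diff)
  have tz: "(\<Sum>p\<in>S. c p * blinfun_apply (snd p) (blinfun_apply D (fst p))) = 0"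
    if "D \<in> W" "\<forall>y\<in>Y. CM_sum S c y \<in> Y" for D c
    by (rule trace_zero[OF fin sY finS]) (use that W_def in auto)
  have Tinv': "\<forall>y\<in>Y. CM_sum S \<alpha> y \<in> Y" using Tinv Tdef by simp
  have attain: "blinfun_apply (snd p) (blinfun_apply P (fst p)) = lam"
    if P: "P \<in> min_projections Y" and p: "p \<in> S" for P p
  proof -
    have nP: "norm P = lam" using P unfolding min_projections_def lam_def by simp
    have "(\<Sum>p\<in>S. \<alpha> p * blinfun_apply (snd p) (blinfun_apply (P - P0) (fst p))) = 0"
      by (rule tz[OF MPdiff[OF P P0] Tinv'])
    then have "(\<Sum>p\<in>S. \<alpha> p * blinfun_apply (snd p) (blinfun_apply P (fst p))) = (\<Sum>p\<in>S. \<alpha> p * lam)"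
      using P0S by (simp add: blinfun.diff_left blinfun.diff_right right_diff_distrib sum_subtractf)
    define fq where "fq q = \<alpha> q * (lam - blinfun_apply (snd q) (blinfun_apply P (fst q)))" for q
    have Z: "sum fq S = 0" unfolding fq_def using \<open>(\<Sum>p\<in>S. \<alpha> p * blinfun_apply (snd p) (blinfun_apply P (fst p))) = (\<Sum>p\<in>S. \<alpha> p * lam)\<close>
      by (simp add: right_diff_distrib sum_subtractf)
    have nn: "0 \<le> fq q" if q: "q \<in> S" for q
      unfolding fq_def using bnd[OF q, of P] nP apos[OF q] by (intro mult_nonneg_nonneg) auto
    have "fq p = 0" using sum_nonneg_eq_0_iff[OF finS, of fq] nn Z p by blast
    then have "\<alpha> p * (lam - blinfun_apply (snd p) (blinfun_apply P (fst p))) = 0" unfolding fq_def .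
    then show ?thesis using p apos[OF p] by simp
  qed
  obtain p0 where p0: "p0 \<in> S" using Sne by blast
  define I where "I = S - {p0}"
  have finI: "finite I" unfolding I_def using finS by simp
  have cardI: "card I = l - 1" unfolding I_def using p0 finS assms(9) by simp
  have "card S > 0" using finS Sne by (simp add: card_gt_0_iff)
  then have l1: "l \<ge> 1" using assms(9) by linarith
  define \<psi> where "\<psi> p D = blinfun_apply (snd p) (blinfun_apply D (fst p))"
    for p :: "'a \<times> ('a \<Rightarrow>\<^sub>L real)" and D :: "'a \<Rightarrow>\<^sub>L 'a"
  have lin\<psi>: "linear (\<psi> p)" for p
  proof (rule linearI)
    fix D E :: "'a \<Rightarrow>\<^sub>L 'a"
    show "\<psi> p (D + E) = \<psi> p D + \<psi> p E"
      unfolding \<psi>_def by (simp add: blinfun.add_left blinfun.add_right)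
  next
    fix r and D :: "'a \<Rightarrow>\<^sub>L 'a"
    show "\<psi> p (r *\<^sub>R D) = r *\<^sub>R \<psi> p D"
      unfolding \<psi>_def by (simp add: blinfun.scaleR_left blinfun.scaleR_right)
  qed
  have h\<alpha>: "(\<Sum>p\<in>S. \<alpha> p * \<psi> p w) = 0" if "w \<in> W" for w
    using tz[OF that Tinv'] unfolding \<psi>_def .
  have indep: "\<forall>i\<in>I. c i = 0" if h: "\<forall>w\<in>W. (\<Sum>i\<in>I. c i * \<psi> i w) = 0" for c
  proof (rule ccontr)
    assume "\<not> (\<forall>i\<in>I. c i = 0)"
    then obtain q where qI: "q \<in> I" and cq: "c q \<noteq> 0" by blast
    define \<beta> where "\<beta> p = (if p \<in> I then c p else 0)" for p
    have h\<beta>: "(\<Sum>p\<in>S. \<beta> p * \<psi> p w) = 0" if "w \<in> W" for w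
    proof -
      have "(\<Sum>p\<in>S. \<beta> p * \<psi> p w) = (\<Sum>p\<in>I. c p * \<psi> p w)"
        unfolding \<beta>_def by (rule sum.mono_neutral_cong_right) (use finS I_def in auto)
      then show ?thesis using h that by simp
    qed
    define s where "s = sum \<beta> S"
    define \<beta>' where "\<beta>' p = \<beta> p - s * \<alpha> p" for p
    have h\<beta>': "(\<Sum>p\<in>S. \<beta>' p * \<psi> p w) = 0" if "w \<in> W" for w
    proof -
      have "(\<Sum>p\<in>S. \<beta>' p * \<psi> p w) = (\<Sum>p\<in>S. \<beta> p * \<psi> p w - s * (\<alpha> p * \<psi> p w))"
        by (rule sum.cong) (simp_all add: \<beta>'_def algebra_simps)
      also have "\<dots> = (\<Sum>p\<in>S. \<beta> p * \<psi> p w) - s * (\<Sum>p\<in>S. \<alpha> p * \<psi> p w)"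
        by (simp add: sum_subtractf sum_distrib_left)
      finally have "(\<Sum>p\<in>S. \<beta>' p * \<psi> p w) = (\<Sum>p\<in>S. \<beta> p * \<psi> p w) - s * (\<Sum>p\<in>S. \<alpha> p * \<psi> p w)" .
      then show ?thesis using h\<beta>[OF that] h\<alpha>[OF that] by simp
    qed
    have s\<beta>': "sum \<beta>' S = 0"
    proof -
      have "sum \<beta>' S = sum \<beta> S - s * sum \<alpha> S"
        unfolding \<beta>'_def by (simp add: sum_subtractf sum_distrib_left)
      then show ?thesis using sa s_def by simp
    qed
    have nz: "\<exists>p\<in>S. \<beta>' p \<noteq> 0"
    proof (cases "s = 0")
      case True
      then have "\<beta>' q = c q" using qI unfolding \<beta>'_def \<beta>_def by simp
      then show ?thesis using cq qI I_def by auto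
    next
      case False
      have "p0 \<notin> I" unfolding I_def by simp
      then have "\<beta>' p0 = - s * \<alpha> p0" unfolding \<beta>'_def \<beta>_def by simp
      then have "\<beta>' p0 \<noteq> 0" using False apos[OF p0] by simp
      then show ?thesis using p0 by blast
    qed
    have "\<exists>p\<in>S. \<beta>' p > 0"
    proof (rule ccontr)
      assume "\<not> (\<exists>p\<in>S. \<beta>' p > 0)"
      then have nn: "\<And>p. p \<in> S \<Longrightarrow> 0 \<le> - \<beta>' p" by force
      have "sum (\<lambda>p. - \<beta>' p) S = 0" using s\<beta>' by (simp add: sum_negf)
      then have "\<forall>p\<in>S. - \<beta>' p = 0" using sum_nonneg_eq_0_iff[OF finS, of "\<lambda>p. - \<beta>' p"] nn by blast
      then show False using nz by auto
    qed
    define Pos where "Pos = {p\<in>S. \<beta>' p > 0}"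
    have finPos: "finite Pos" unfolding Pos_def using finS by simp
    have nePos: "Pos \<noteq> {}" unfolding Pos_def using \<open>\<exists>p\<in>S. \<beta>' p > 0\<close> by blast
    define t where "t = Min ((\<lambda>p. \<alpha> p / \<beta>' p) ` Pos)"
    have t_le: "t \<le> \<alpha> p / \<beta>' p" if "p \<in> Pos" for p
      unfolding t_def using finPos that by (intro Min_le) auto
    have "t \<in> (\<lambda>p. \<alpha> p / \<beta>' p) ` Pos" unfolding t_def using finPos nePos by (intro Min_in) auto
    then obtain pm where pm: "pm \<in> Pos" and tpm: "t = \<alpha> pm / \<beta>' pm" by blast
    have pmS: "pm \<in> S" and bpm: "\<beta>' pm > 0" using pm unfolding Pos_def by auto
    have tpos: "t > 0" using tpm apos[OF pmS] bpm by simp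
    define \<gamma> where "\<gamma> p = \<alpha> p - t * \<beta>' p" for p
    have \<gamma>nn: "\<gamma> p \<ge> 0" if pS: "p \<in> S" for p
    proof (cases "\<beta>' p > 0")
      case True
      then have "p \<in> Pos" unfolding Pos_def using pS by simp
      then have "t \<le> \<alpha> p / \<beta>' p" by (rule t_le)
      then have "t * \<beta>' p \<le> \<alpha> p" using True by (simp add: pos_le_divide_eq)
      then show ?thesis unfolding \<gamma>_def by simp
    next
      case False
      then have "t * \<beta>' p \<le> 0" using tpos by (simp add: mult_nonneg_nonpos)
      then show ?thesis unfolding \<gamma>_def using apos[OF pS] by simp
    qed
    have \<gamma>pm: "\<gamma> pm = 0" unfolding \<gamma>_def tpm using bpm by simp
    have s\<gamma>: "sum \<gamma> S = 1"
    proof -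
      have "sum \<gamma> S = sum \<alpha> S - t * sum \<beta>' S"
        unfolding \<gamma>_def by (simp add: sum_subtractf sum_distrib_left)
      then show ?thesis using sa s\<beta>' by simp
    qed
    have h\<gamma>: "(\<Sum>p\<in>S. \<gamma> p * \<psi> p w) = 0" if "w \<in> W" for w
    proof -
      have "(\<Sum>p\<in>S. \<gamma> p * \<psi> p w) = (\<Sum>p\<in>S. \<alpha> p * \<psi> p w - t * (\<beta>' p * \<psi> p w))"
        by (rule sum.cong) (simp_all add: \<gamma>_def algebra_simps)
      also have "\<dots> = (\<Sum>p\<in>S. \<alpha> p * \<psi> p w) - t * (\<Sum>p\<in>S. \<beta>' p * \<psi> p w)"
        by (simp add: sum_subtractf sum_distrib_left)
      finally have "(\<Sum>p\<in>S. \<gamma> p * \<psi> p w) = (\<Sum>p\<in>S. \<alpha> p * \<psi> p w) - t * (\<Sum>p\<in>S. \<beta>' p * \<psi> p w)" .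
      then show ?thesis using h\<beta>'[OF that] h\<alpha>[OF that] by simp
    qed
    have inv\<gamma>: "\<forall>y\<in>Y. CM_sum S \<gamma> y \<in> Y"
    proof (rule converse_inv[OF fin sY])
      fix D :: "'a \<Rightarrow>\<^sub>L 'a"
      assume "\<forall>x. blinfun_apply D x \<in> Y" "\<forall>y\<in>Y. blinfun_apply D y = 0"
      then have "D \<in> W" unfolding W_def by blast
      from h\<gamma>[OF this] show "(\<Sum>p\<in>S. \<gamma> p * blinfun_apply (snd p) (blinfun_apply D (fst p))) = 0"
        unfolding \<psi>_def .
    qed
    define S' where "S' = {p\<in>S. \<gamma> p > 0}"
    have S'S: "S' \<subseteq> S" unfolding S'_def by auto
    have "pm \<notin> S'" unfolding S'_def using \<gamma>pm by simp
    then have S'sub: "S' \<subset> S" using S'S pmS by blast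
    have zero_out: "\<gamma> p = 0" if "p \<in> S - S'" for p
    proof -
      have "p \<in> S" "\<not> \<gamma> p > 0" using that unfolding S'_def by auto
      then show ?thesis using \<gamma>nn[of p] by linarith
    qed
    have sumS': "sum \<gamma> S' = 1"
    proof -
      have "sum \<gamma> S' = sum \<gamma> S"
        by (rule sum.mono_neutral_left[OF finS S'S]) (use zero_out in auto)
      then show ?thesis using s\<gamma> by simp
    qed
    have CMeq: "CM_sum S' \<gamma> = CM_sum S \<gamma>"
      unfolding CM_sum_def
    proof
      fix z
      show "(\<Sum>p\<in>S'. \<gamma> p *\<^sub>R (blinfun_apply (snd p) z *\<^sub>R fst p)) = (\<Sum>p\<in>S. \<gamma> p *\<^sub>R (blinfun_apply (snd p) z *\<^sub>R fst p))"
        by (rule sum.mono_neutral_left[OF finS S'S]) (use zero_out in auto)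
    qed
    have S'ne: "S' \<noteq> {}" using sumS' by auto
    have "is_CM_op Y (CM_sum S' \<gamma>) S' \<gamma>"
      unfolding is_CM_op_def
    proof (intro conjI)
      show "finite S'" using finite_subset[OF S'S finS] .
      show "S' \<noteq> {}" by fact
      show "\<forall>p\<in>S'. fst p extreme_point_of cball 0 1 \<and> snd p extreme_point_of cball 0 1 \<and> \<gamma> p > 0"
        using ext S'S unfolding S'_def by auto
      show "sum \<gamma> S' = 1" by fact
      show "CM_sum S' \<gamma> = CM_sum S' \<gamma>" by (rule refl)
      show "\<forall>y\<in>Y. CM_sum S' \<gamma> y \<in> Y" using inv\<gamma> CMeq by simp
      show "\<exists>P0\<in>min_projections Y. \<forall>p\<in>S'. blinfun_apply (snd p) (blinfun_apply P0 (fst p)) = proj_const Y"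
        using P0 P0S S'S unfolding lam_def by blast
    qed
    moreover have "\<not> is_CM_op Y (CM_sum S' \<gamma>) S' \<gamma>"
      using assms(8) S'sub unfolding minimal_CM_support_def by blast
    ultimately show False by blast
  qed
  obtain F where F: "finite F" "card F \<le> k * (n - k)" "W \<subseteq> span F"
    using dim_W_bound[OF fin sY assms(2) assms(4)] unfolding W_def by blast
  define K where "K = {w\<in>W. \<forall>i\<in>I. \<psi> i w = 0}"
  have dk: "dim K + card I \<le> dim W"
    unfolding K_def by (rule dim_kernel_bound[OF finI sW F(3) F(1) lin\<psi> indep])
  have dW: "dim W \<le> card F" by (rule dim_le_card[OF F(3) F(1)])
  define \<Delta> where "\<Delta> = {p - q |p q. p \<in> min_projections Y \<and> q \<in> min_projections Y}"
  have \<Delta>K: "\<Delta> \<subseteq> K"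
  proof
    fix x assume "x \<in> \<Delta>"
    then obtain P Q where PQ: "P \<in> min_projections Y" "Q \<in> min_projections Y" "x = P - Q"
      unfolding \<Delta>_def by blast
    have "x \<in> W" using MPdiff[OF PQ(1,2)] PQ(3) by simp
    moreover have "\<psi> i x = 0" if "i \<in> I" for i
    proof -
      have iS: "i \<in> S" using that I_def by simp
      show ?thesis unfolding \<psi>_def PQ(3)
        using attain[OF PQ(1) iS] attain[OF PQ(2) iS] by (simp add: blinfun.diff_left blinfun.diff_right)
    qed
    ultimately show "x \<in> K" unfolding K_def by blast
  qed
  obtain BK where BK: "BK \<subseteq> K" "independent BK" "K \<subseteq> span BK" "card BK = dim K"
    by (rule basis_exists[of K])
  have "BK \<subseteq> span F" using BK(1) F(3) unfolding K_def by auto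
  then have fBK: "finite BK" using independent_span_bound[OF F(1) BK(2)] by simp
  have dD: "dim \<Delta> \<le> dim K"
    using dim_le_card[OF _ fBK, of \<Delta>] \<Delta>K BK(3,4) by auto
  have MPne: "min_projections Y \<noteq> {}" using P0 by blast
  have ad: "affine_dimension (min_projections Y) = int (dim \<Delta>)"
    unfolding affine_dimension_def \<Delta>_def using MPne by simp
  have kn: "k \<le> n" using assms(5,6) by linarith
  have "dim \<Delta> + (l - 1) \<le> k * (n - k)" using dD dk dW F(2) cardI by linarith
  then have A: "int (dim \<Delta> + (l - 1)) \<le> int (k * (n - k))" by (simp only: of_nat_le_iff)
  have B1: "int (dim \<Delta> + (l - 1)) = int (dim \<Delta>) + (int l - 1)" using l1 by (simp add: of_nat_diff)
  have B2: "int (k * (n - k)) = int k * (int n - int k)" using kn by (simp add: of_nat_diff)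
  have "int (dim \<Delta>) + (int l - 1) \<le> int k * (int n - int k)" using A unfolding B1 B2 .
  then show ?thesis using ad by simp
qed

end
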